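(* Let $P\subset\mathbb{R}^2$ be a closed PL disk equipped with the metric $d_P$, where $d_P(x,y)$ is the infimum of Euclidean lengths of PL arcs in $P$ joining $x$ and $y$. Let $T\subset P$ be a topological triod with endpoints $\{a,b,c\}$ and vertex $x$, and let $\alpha_{ab},\alpha_{bc},\alpha_{ac}$ denote the arcs in $T$ connecting the respective pairs of endpoints. Then at least one of $\alpha_{ab},\alpha_{bc},\alpha_{ac}$ is not a geodesic of $(P,d_P)$.
   Context: A triod is a space homeomorphic to $([-1,1]\times\{0\})\cup(\{0\}\times[0,1])$; its endpoints are the three points whose removal leaves it connected, and its vertex is the branch point. $(P,d_P)$ is a CAT(0) space; a geodesic is an arc whose length equals the $d_P$-distance between its endpoints. *)

theory Defs
  imports "HOL-Analysis.Analysis"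
begin

fun pl_path :: "'a::real_normed_vector list \<Rightarrow> real \<Rightarrow> 'a" where
  "pl_path [] = linepath 0 0"
| "pl_path [p] = linepath p p"
| "pl_path [p, q] = linepath p q"
| "pl_path (p # q # r # ps) = linepath p q +++ pl_path (q # r # ps)"

definition pl_length :: "'a::real_normed_vector list \<Rightarrow> real" where
  "pl_length ps = (\<Sum>i < length ps - 1. dist (ps ! i) (ps ! Suc i))"

definition dP :: "'a::real_normed_vector set \<Rightarrow> 'a \<Rightarrow> 'a \<Rightarrow> real" where
  "dP P x y = (if x = y then 0 else
     Inf {pl_length ps | ps. ps \<noteq> [] \<and> hd ps = x \<and> last ps = y \<and>
                            arc (pl_path ps) \<and> path_image (pl_path ps) \<subseteq> P})"

definition pl_disk :: "(real^2) set \<Rightarrow> bool" where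
  "pl_disk P \<longleftrightarrow>
     (\<exists>\<T>. finite \<T> \<and> (\<forall>S\<in>\<T>. \<exists>u v w. S = convex hull {u, v, w}) \<and> P = \<Union>\<T>) \<and>
     P homeomorphic cball (0::real^2) 1"

definition curve_length :: "('a \<Rightarrow> 'a \<Rightarrow> real) \<Rightarrow> (real \<Rightarrow> 'a) \<Rightarrow> ereal" where
  "curve_length d g =
     (SUP nt \<in> {(n, t::nat \<Rightarrow> real). t 0 = 0 \<and> t n = 1 \<and> (\<forall>i<n. t i \<le> t (Suc i))}.
        ereal (\<Sum>i < fst nt. d (g (snd nt i)) (g (snd nt (Suc i)))))"

definition geodesic_in :: "(real^2) set \<Rightarrow> (real \<Rightarrow> real^2) \<Rightarrow> bool" where
  "geodesic_in P g \<longleftrightarrow> arc g \<and> path_image g \<subseteq> P \<and>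
     curve_length (dP P) g = ereal (dP P (pathstart g) (pathfinish g))"

definition standard_triod :: "(real^2) set" where
  "standard_triod = {vector [t, 0] | t. -1 \<le> t \<and> t \<le> 1} \<union> {vector [0, t] | t. 0 \<le> t \<and> t \<le> 1}"

definition triod :: "(real^2) set \<Rightarrow> bool" where
  "triod T \<longleftrightarrow> T homeomorphic standard_triod"

definition triod_endpoints :: "(real^2) set \<Rightarrow> (real^2) set" where
  "triod_endpoints T = {p \<in> T. connected (T - {p})}"

definition triod_vertex :: "(real^2) set \<Rightarrow> real^2 \<Rightarrow> bool" where
  "triod_vertex T x \<longleftrightarrow> x \<in> T \<and> card (components (T - {x})) = 3"

end

theory Submission
  imports Defs "HOL-Analysis.Analysis"
begin

fun pimg :: "'a::real_normed_vector list \<Rightarrow> 'a set" where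
  "pimg [] = {}"
| "pimg [p] = {p}"
| "pimg (p # q # ps) = closed_segment p q \<union> pimg (q # ps)"

fun plen :: "'a::real_normed_vector list \<Rightarrow> real" where
  "plen [] = 0"
| "plen [p] = 0"
| "plen (p # q # ps) = dist p q + plen (q # ps)"

fun parc :: "'a::real_normed_vector list \<Rightarrow> bool" where
  "parc [] = False"
| "parc [p] = True"
| "parc (p # q # ps) = (p \<noteq> q \<and> parc (q # ps) \<and> closed_segment p q \<inter> pimg (q # ps) \<subseteq> {q})"

lemma pl_length_plen: "pl_length ps = plen ps"
proof (induction ps rule: plen.induct)
  case 1 then show ?case by (simp add: pl_length_def)
next
  case (2 p) then show ?case by (simp add: pl_length_def)
next
  case (3 p q ps)
  have "pl_length (p # q # ps) = (\<Sum>i < Suc (length ps). dist ((p#q#ps) ! i) ((p#q#ps) ! Suc i))"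
    by (simp add: pl_length_def)
  also have "\<dots> = dist p q + (\<Sum>i < length ps. dist ((q#ps) ! i) ((q#ps) ! Suc i))"
    by (subst sum.lessThan_Suc_shift) simp
  also have "\<dots> = dist p q + pl_length (q # ps)" by (simp add: pl_length_def)
  finally show ?case using 3 by simp
qed

lemma pl_path_props:
  assumes "ps \<noteq> []"
  shows "path (pl_path ps) \<and> pathstart (pl_path ps) = hd ps \<and> pathfinish (pl_path ps) = last ps
         \<and> path_image (pl_path ps) = pimg ps"
  using assms
proof (induction ps rule: pl_path.induct)
  case (4 p q r ps)
  then show ?case
    by (simp add: path_image_join)
qed (auto)

lemma hd_in_pimg: "ps \<noteq> [] \<Longrightarrow> hd ps \<in> pimg ps"
  by (induction ps rule: pimg.induct) auto

lemma last_in_pimg: "ps \<noteq> [] \<Longrightarrow> last ps \<in> pimg ps"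
  by (induction ps rule: pimg.induct) auto

lemma hd_in_pimg' [simp]: "p \<in> pimg (p # xs)"
  by (cases xs) auto

lemma pimg_Cons: "qs \<noteq> [] \<Longrightarrow> pimg (p # qs) = closed_segment p (hd qs) \<union> pimg qs"
  by (cases qs) auto

lemma plen_Cons: "qs \<noteq> [] \<Longrightarrow> plen (p # qs) = dist p (hd qs) + plen qs"
  by (cases qs) auto

lemma parc_Cons: "qs \<noteq> [] \<Longrightarrow> parc (p # qs) \<longleftrightarrow> p \<noteq> hd qs \<and> parc qs \<and> closed_segment p (hd qs) \<inter> pimg qs \<subseteq> {hd qs}"
  by (cases qs) auto

lemma parc_arc2:
  "parc (p # q # ps) \<Longrightarrow> arc (pl_path (p # q # ps))"
proof (induction ps arbitrary: p q)
  case Nil then show ?case by (simp add: arc_linepath)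
next
  case (Cons r ps)
  have a2: "arc (pl_path (q # r # ps))" using Cons by simp
  have pp: "path_image (pl_path (q # r # ps)) = pimg (q # r # ps)"
    "pathstart (pl_path (q # r # ps)) = q"
    using pl_path_props[of "q # r # ps"] by auto
  show ?case
    using Cons.prems a2 pp by (auto intro!: arc_join simp: arc_linepath)
qed

lemma parc_arc:
  assumes "parc ps" "2 \<le> length ps"
  shows "arc (pl_path ps)"
  using assms parc_arc2 by (cases ps rule: plen.cases) auto

lemma plen_ge_dist: "ps \<noteq> [] \<Longrightarrow> dist (hd ps) (last ps) \<le> plen ps"
proof (induction ps rule: plen.induct)
  case (3 p q ps)
  then show ?case using dist_triangle[of p "last (q # ps)" q] by simp
qed auto

lemma plen_nonneg: "0 \<le> plen ps"
  by (induction ps rule: plen.induct) auto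


lemma pimg_append: "ps \<noteq> [] \<Longrightarrow> qs \<noteq> [] \<Longrightarrow> last ps = hd qs \<Longrightarrow>
   pimg (ps @ tl qs) = pimg ps \<union> pimg qs \<and> plen (ps @ tl qs) = plen ps + plen qs \<and>
   hd (ps @ tl qs) = hd ps \<and> last (ps @ tl qs) = last qs \<and> ps @ tl qs \<noteq> []"
proof (induction ps rule: pimg.induct)
  case 1 then show ?case by simp
next
  case (2 p)
  then show ?case by (cases qs) (auto simp: last_in_pimg)
next
  case (3 p q ps)
  have ne: "(q # ps) @ tl qs \<noteq> []" by simp
  have "hd ((q # ps) @ tl qs) = q" by simp
  then show ?case using 3 pimg_Cons[OF ne, of p] plen_Cons[OF ne, of p]
    by (auto simp: last_append)
qed

lemma dist_seg: "(z::'a::euclidean_space) \<in> closed_segment a b \<Longrightarrow> dist a b = dist a z + dist z b"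
  using between between_mem_segment by blast

lemma key_L:
  fixes K :: "'a::euclidean_space set"
  assumes "parc qs" "K \<inter> pimg qs \<noteq> {}" "closed K"
  shows "\<exists>s ts. s \<in> K \<and> parc ts \<and> ts \<noteq> [] \<and> hd ts = s \<and> last ts = last qs \<and> pimg ts \<subseteq> pimg qs
     \<and> pimg ts \<inter> K = {s} \<and> plen ts + dist (hd qs) s \<le> plen qs"
  using assms
proof (induction qs rule: plen.induct)
  case 1 then show ?case by simp
next
  case (2 p)
  then show ?case by (intro exI[of _ p] exI[of _ "[p]"]) auto
next
  case (3 q0 q1 rest)
  show ?case
  proof (cases "K \<inter> pimg (q1 # rest) = {}")
    case False
    from "3.IH"[OF _ False \<open>closed K\<close>] "3.prems"(1) obtain s ts where
      st: "s \<in> K" "parc ts" "ts \<noteq> []" "hd ts = s" "last ts = last (q1 # rest)" "pimg ts \<subseteq> pimg (q1 # rest)"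
       "pimg ts \<inter> K = {s}" "plen ts + dist q1 s \<le> plen (q1 # rest)" by auto
    have "dist q0 s \<le> dist q0 q1 + dist q1 s" by (rule dist_triangle)
    then show ?thesis using st by (intro exI[of _ s] exI[of _ ts]) auto
  next
    case True
    let ?A = "K \<inter> closed_segment q0 q1"
    have Ane: "?A \<noteq> {}" using True "3.prems"(2) by auto
    have Acl: "closed ?A" using \<open>closed K\<close> by (simp add: closed_Int)
    obtain s where s: "s \<in> ?A" "\<And>y. y \<in> ?A \<Longrightarrow> dist q1 s \<le> dist q1 y"
      using distance_attains_inf[OF Acl Ane, of q1] by blast
    have q1K: "q1 \<notin> K" using True hd_in_pimg[of "q1 # rest"] by auto
    have sq1: "s \<noteq> q1" using s q1K by auto
    have par: "parc (q1 # rest)" "closed_segment q0 q1 \<inter> pimg (q1 # rest) \<subseteq> {q1}" "q0 \<noteq> q1"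
      using "3.prems"(1) by auto
    have sub: "closed_segment s q1 \<subseteq> closed_segment q0 q1"
      using s(1) by (simp add: subset_closed_segment)
    have segK: "closed_segment s q1 \<inter> K = {s}"
    proof
      show "closed_segment s q1 \<inter> K \<subseteq> {s}"
      proof
        fix z assume z: "z \<in> closed_segment s q1 \<inter> K"
        then have "z \<in> ?A" using sub by auto
        then have "dist q1 s \<le> dist q1 z" by (rule s(2))
        moreover have "dist s q1 = dist s z + dist z q1" using z dist_seg by blast
        ultimately have "dist s z \<le> 0" by (simp add: dist_commute)
        then show "z \<in> {s}" by simp
      qed
    qed (use s in auto)
    let ?ts = "s # q1 # rest"
    have "parc ?ts" using sq1 par sub by auto
    moreover have "pimg ?ts \<subseteq> pimg (q0 # q1 # rest)" using sub by auto
    moreover have "pimg ?ts \<inter> K = {s}" using segK True by auto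
    moreover have "dist q0 q1 = dist q0 s + dist s q1" using s(1) dist_seg by blast
    ultimately show ?thesis using s(1)
      by (intro exI[of _ s] exI[of _ ?ts]) auto
  qed
qed

lemma loop_erase:
  fixes ps :: "'a::euclidean_space list"
  assumes "ps \<noteq> []"
  shows "\<exists>qs. parc qs \<and> qs \<noteq> [] \<and> hd qs = hd ps \<and> last qs = last ps \<and> pimg qs \<subseteq> pimg ps \<and> plen qs \<le> plen ps"
  using assms
proof (induction ps rule: plen.induct)
  case 1 then show ?case by simp
next
  case (2 p) then show ?case by (intro exI[of _ "[p]"]) auto
next
  case (3 p q rest)
  obtain qs where qs: "parc qs" "qs \<noteq> []" "hd qs = q" "last qs = last (q # rest)"
     "pimg qs \<subseteq> pimg (q # rest)" "plen qs \<le> plen (q # rest)"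
    using "3.IH" by auto
  have "closed_segment p q \<inter> pimg qs \<noteq> {}" using hd_in_pimg[OF qs(2)] qs(3) by auto
  then obtain s ts where st: "s \<in> closed_segment p q" "parc ts" "ts \<noteq> []" "hd ts = s" "last ts = last qs"
      "pimg ts \<subseteq> pimg qs" "pimg ts \<inter> closed_segment p q = {s}" "plen ts + dist q s \<le> plen qs"
    using key_L[OF qs(1), of "closed_segment p q"] qs(3) by auto
  show ?case
  proof (cases "s = p")
    case True
    have "plen ts \<le> plen (p # q # rest)" using st qs zero_le_dist[of q s] zero_le_dist[of p q] by (simp, linarith)
    then show ?thesis using st qs True
      by (intro exI[of _ ts]) auto
  next
    case False
    have sub: "closed_segment p s \<subseteq> closed_segment p q" using st(1) by (simp add: subset_closed_segment)
    have "parc (p # ts)" using parc_Cons[OF st(3)] st False sub by auto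
    moreover have "pimg (p # ts) \<subseteq> pimg (p # q # rest)"
      using pimg_Cons[OF st(3), of p] st qs sub by auto
    moreover have "plen (p # ts) \<le> plen (p # q # rest)"
      using plen_Cons[OF st(3), of p] st qs dist_triangle[of p s q] by (auto simp: dist_commute)
    ultimately show ?thesis using st qs by (intro exI[of _ "p # ts"]) auto
  qed
qed

definition plconn :: "'a::real_normed_vector set \<Rightarrow> bool" where
  "plconn P \<longleftrightarrow> (\<forall>x\<in>P. \<forall>y\<in>P. \<exists>ps. ps \<noteq> [] \<and> hd ps = x \<and> last ps = y \<and> pimg ps \<subseteq> P)"

abbreviation dset :: "'a::real_normed_vector set \<Rightarrow> 'a \<Rightarrow> 'a \<Rightarrow> real set" where
  "dset P x y \<equiv> {pl_length ps | ps. ps \<noteq> [] \<and> hd ps = x \<and> last ps = y \<and>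
                            arc (pl_path ps) \<and> path_image (pl_path ps) \<subseteq> P}"

lemma dset_bdd: "bdd_below (dset P x y)"
  by (rule bdd_belowI[of _ 0]) (auto simp: pl_length_plen plen_nonneg)

lemma dset_mem:
  fixes ps :: "'a::euclidean_space list"
  assumes "ps \<noteq> []" "hd ps = x" "last ps = y" "pimg ps \<subseteq> P" "x \<noteq> y"
  shows "\<exists>l\<in>dset P x y. l \<le> plen ps"
proof -
  obtain qs where qs: "parc qs" "qs \<noteq> []" "hd qs = x" "last qs = y" "pimg qs \<subseteq> pimg ps" "plen qs \<le> plen ps"
    using loop_erase[OF assms(1)] assms by auto
  have "2 \<le> length qs"
  proof (rule ccontr)
    assume "\<not> 2 \<le> length qs"
    with qs(2) obtain z where "qs = [z]" by (cases qs rule: plen.cases) auto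
    with qs assms show False by simp
  qed
  then have "arc (pl_path qs)" using parc_arc qs by blast
  moreover have "path_image (pl_path qs) \<subseteq> P" using pl_path_props[OF qs(2)] qs assms by auto
  ultimately show ?thesis using qs by (intro bexI[of _ "pl_length qs"]) (auto simp: pl_length_plen)
qed

lemma dP_le_plen:
  fixes ps :: "'a::euclidean_space list"
  assumes "ps \<noteq> []" "hd ps = x" "last ps = y" "pimg ps \<subseteq> P"
  shows "dP P x y \<le> plen ps"
proof (cases "x = y")
  case True then show ?thesis by (simp add: dP_def plen_nonneg)
next
  case False
  then obtain l where "l \<in> dset P x y" "l \<le> plen ps" using dset_mem[OF assms] by blast
  then show ?thesis using False cInf_lower[of l "dset P x y", OF _ dset_bdd] by (simp add: dP_def)
qed

lemma dP_le_dist: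
  fixes u v :: "'a::euclidean_space"
  assumes "closed_segment u v \<subseteq> P"
  shows "dP P u v \<le> dist u v"
  using dP_le_plen[of "[u,v]" u v P] assms ends_in_segment(2)[of v u] by auto

lemma dset_ne:
  fixes x y :: "'a::euclidean_space"
  assumes "plconn P" "x \<in> P" "y \<in> P" "x \<noteq> y"
  shows "dset P x y \<noteq> {}"
proof -
  obtain ps where "ps \<noteq> []" "hd ps = x" "last ps = y" "pimg ps \<subseteq> P"
    using assms unfolding plconn_def by blast
  then show ?thesis using dset_mem[of ps x y P] assms by blast
qed

lemma dP_ge_dist:
  fixes x y :: "'a::euclidean_space"
  assumes "plconn P" "x \<in> P" "y \<in> P"
  shows "dist x y \<le> dP P x y"
proof (cases "x = y")
  case True then show ?thesis by (simp add: dP_def)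
next
  case False
  have "dist x y \<le> Inf (dset P x y)"
  proof (rule cInf_greatest[OF dset_ne[OF assms False]])
    fix l assume "l \<in> dset P x y"
    then obtain ps where "ps \<noteq> []" "hd ps = x" "last ps = y" "l = plen ps"
      by (auto simp: pl_length_plen)
    then show "dist x y \<le> l" using plen_ge_dist[of ps] by simp
  qed
  then show ?thesis using False by (simp add: dP_def)
qed

lemma dP_approx:
  fixes x y :: "'a::euclidean_space"
  assumes "plconn P" "x \<in> P" "y \<in> P" "e > 0"
  shows "\<exists>ps. ps \<noteq> [] \<and> hd ps = x \<and> last ps = y \<and> pimg ps \<subseteq> P \<and> plen ps < dP P x y + e"
proof (cases "x = y")
  case True then show ?thesis using assms by (intro exI[of _ "[x]"]) (auto simp: dP_def)
next
  case False
  have "Inf (dset P x y) < Inf (dset P x y) + e" using assms by simp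
  then obtain l where "l \<in> dset P x y" "l < Inf (dset P x y) + e"
    using cInf_lessD[OF dset_ne[OF assms(1-3) False]] by blast
  then obtain ps where "ps \<noteq> []" "hd ps = x" "last ps = y" "arc (pl_path ps)"
      "path_image (pl_path ps) \<subseteq> P" "plen ps < dP P x y + e"
    using False by (auto simp: pl_length_plen dP_def)
  then show ?thesis using pl_path_props[of ps] by (intro exI[of _ ps]) auto
qed

lemma dP_tri:
  fixes x y z :: "'a::euclidean_space"
  assumes "plconn P" "x \<in> P" "y \<in> P" "z \<in> P"
  shows "dP P x z \<le> dP P x y + dP P y z"
proof (rule field_le_epsilon)
  fix e :: real assume e: "0 < e"
  obtain ps where ps: "ps \<noteq> []" "hd ps = x" "last ps = y" "pimg ps \<subseteq> P" "plen ps < dP P x y + e/2"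
    using dP_approx[OF assms(1-3), of "e/2"] e by auto
  obtain qs where qs: "qs \<noteq> []" "hd qs = y" "last qs = z" "pimg qs \<subseteq> P" "plen qs < dP P y z + e/2"
    using dP_approx[OF assms(1,3,4), of "e/2"] e by auto
  have ap: "pimg (ps @ tl qs) = pimg ps \<union> pimg qs \<and> plen (ps @ tl qs) = plen ps + plen qs \<and>
   hd (ps @ tl qs) = hd ps \<and> last (ps @ tl qs) = last qs \<and> ps @ tl qs \<noteq> []"
    using pimg_append[OF ps(1) qs(1)] ps qs by simp
  have "dP P x z \<le> plen (ps @ tl qs)" using dP_le_plen[of "ps @ tl qs" x z P] ap ps qs by auto
  then show "dP P x z \<le> dP P x y + dP P y z + e" using ap ps qs by simp
qed

lemma plconn_union:
  fixes P :: "'a::euclidean_space set"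
  assumes fin: "finite \<T>" and cv: "\<And>S. S \<in> \<T> \<Longrightarrow> convex S \<and> closed S"
    and P: "P = \<Union>\<T>" and con: "connected P"
  shows "plconn P"
  unfolding plconn_def
proof (intro ballI)
  fix x y assume x: "x \<in> P" and y: "y \<in> P"
  define A where "A = {y\<in>P. \<exists>ps. ps \<noteq> [] \<and> hd ps = x \<and> last ps = y \<and> pimg ps \<subseteq> P}"
  have ext: "S \<subseteq> A" if S: "S \<in> \<T>" "S \<inter> A \<noteq> {}" for S
  proof
    fix z assume z: "z \<in> S"
    obtain w where w: "w \<in> S" "w \<in> A" using S by auto
    then obtain ps where ps: "ps \<noteq> []" "hd ps = x" "last ps = w" "pimg ps \<subseteq> P" unfolding A_def by auto
    have ap: "pimg (ps @ tl [w, z]) = pimg ps \<union> pimg [w, z] \<and> plen (ps @ tl [w, z]) = plen ps + plen [w, z] \<and>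
      hd (ps @ tl [w, z]) = hd ps \<and> last (ps @ tl [w, z]) = last [w, z] \<and> ps @ tl [w, z] \<noteq> []"
      using pimg_append[OF ps(1), of "[w,z]"] ps by simp
    have "closed_segment w z \<subseteq> S" using cv[OF S(1)] w z by (simp add: closed_segment_subset)
    then have "closed_segment w z \<subseteq> P" using S P by auto
    moreover have "z \<in> P" using z S P by auto
    ultimately have "pimg (ps @ tl [w, z]) \<subseteq> P" using ap ps by auto
    moreover have "z \<in> P" using z S P by auto
    ultimately show "z \<in> A" unfolding A_def using ap ps by (intro CollectI conjI exI[of _ "ps @ tl [w,z]"]) auto
  qed
  define B where "B = \<Union>{S\<in>\<T>. S \<inter> A = {}}"
  have A_eq: "A = \<Union>{S\<in>\<T>. S \<inter> A \<noteq> {}}"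
  proof
    show "A \<subseteq> \<Union>{S\<in>\<T>. S \<inter> A \<noteq> {}}"
    proof
      fix z assume "z \<in> A"
      then have "z \<in> P" unfolding A_def by auto
      then obtain S where "S \<in> \<T>" "z \<in> S" using P by auto
      then show "z \<in> \<Union>{S\<in>\<T>. S \<inter> A \<noteq> {}}" using \<open>z \<in> A\<close> by auto
    qed
    show "\<Union>{S\<in>\<T>. S \<inter> A \<noteq> {}} \<subseteq> A"
      by (rule Union_least) (use ext in blast)
  qed
  have "closed (\<Union>{S\<in>\<T>. S \<inter> A \<noteq> {}})" by (rule closed_Union) (use fin cv in auto)
  then have clA: "closed A" by (metis A_eq)
  have clB: "closed B" unfolding B_def by (rule closed_Union) (use fin cv in auto)
  have cov: "P \<subseteq> A \<union> B" unfolding B_def using A_eq P by blast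
  have dis: "A \<inter> B \<inter> P = {}" unfolding B_def by auto
  have xA: "x \<in> A" unfolding A_def using x by (intro CollectI conjI exI[of _ "[x]"]) auto
  have "B \<inter> P = {}"
  proof (rule ccontr)
    assume "B \<inter> P \<noteq> {}"
    moreover have "A \<inter> P \<noteq> {}" using xA x by auto
    ultimately show False using con clA clB cov dis unfolding connected_closed by blast
  qed
  then have "y \<in> A" using y cov by auto
  then show "\<exists>ps. ps \<noteq> [] \<and> hd ps = x \<and> last ps = y \<and> pimg ps \<subseteq> P" unfolding A_def by auto
qed

lemma pl_disk_plconn:
  assumes "pl_disk P"
  shows "plconn P"
proof -
  obtain \<T> where T: "finite \<T>" "\<forall>S\<in>\<T>. \<exists>u v w. S = convex hull {u, v, w}" "P = \<Union>\<T>"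
    and h: "P homeomorphic cball (0::real^2) 1"
    using assms unfolding pl_disk_def by blast
  have "connected P" using homeomorphic_connectedness[OF h] by simp
  moreover have "convex S \<and> closed S" if "S \<in> \<T>" for S
    using T(2) that by (auto intro!: compact_imp_closed compact_convex_hull)
  ultimately show ?thesis using plconn_union[OF T(1) _ T(3)] by blast
qed

lemma reim_Arg: "z \<noteq> 0 \<Longrightarrow> Re z = cmod z * cos (Arg z) \<and> Im z = cmod z * sin (Arg z)"
  by (simp add: cos_Arg sin_Arg)

lemma cross_Arg:
  assumes "a \<noteq> 0" "b \<noteq> 0"
  shows "Im (cnj a * b) = cmod a * cmod b * sin (Arg b - Arg a) \<and>
         Re (cnj a * b) = cmod a * cmod b * cos (Arg b - Arg a)"
  using reim_Arg[OF assms(1)] reim_Arg[OF assms(2)]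
  by (simp add: sin_diff cos_diff algebra_simps)

lemma sin_nonneg_cases:
  fixes x :: real
  assumes "-2*pi < x" "x < 2*pi" "0 \<le> sin x"
  shows "(0 \<le> x \<and> x \<le> pi) \<or> x \<le> -pi"
proof (rule ccontr)
  assume c: "\<not> ?thesis"
  then consider "pi < x" | "-pi < x \<and> x < 0" by linarith
  then show False
  proof cases
    case 1
    have "0 < sin (x - pi)" using 1 assms by (intro sin_gt_zero) auto
    then show False using assms by (simp add: sin_diff)
  next
    case 2
    have "0 < sin (-x)" using 2 by (intro sin_gt_zero) auto
    then show False using assms by simp
  qed
qed

lemma arg_between:
  fixes p q z :: complex
  assumes p: "p \<noteq> 0" and q: "q \<noteq> 0" and le: "Arg p \<le> Arg q" and lt: "Arg q < Arg p + pi"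
    and z: "z \<in> closed_segment p q"
  shows "z \<noteq> 0 \<and> Arg p \<le> Arg z \<and> Arg z \<le> Arg q"
proof -
  obtain t where t: "0 \<le> t" "t \<le> 1" "z = (1 - t) *\<^sub>R p + t *\<^sub>R q"
    using z unfolding closed_segment_def by auto
  define \<alpha> where "\<alpha> = Arg p"
  define \<beta> where "\<beta> = Arg q"
  have pq: "Im (cnj p * q) = cmod p * cmod q * sin (\<beta> - \<alpha>)" "Re (cnj p * q) = cmod p * cmod q * cos (\<beta> - \<alpha>)"
    using cross_Arg[OF p q] unfolding \<alpha>_def \<beta>_def by auto
  have sinpq: "0 \<le> sin (\<beta> - \<alpha>)" using le lt unfolding \<alpha>_def \<beta>_def by (intro sin_ge_zero) auto
  have Impq: "0 \<le> Im (cnj p * q)" using pq sinpq by simp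
  have pp: "cnj p * p = of_real (cmod p ^ 2)" by (simp only: complex_norm_square mult.commute)
  have qq: "cnj q * q = of_real (cmod q ^ 2)" by (simp only: complex_norm_square mult.commute)
  have cpz: "cnj p * z = (1 - t) *\<^sub>R (cnj p * p) + t *\<^sub>R (cnj p * q)"
    unfolding t(3) by (simp add: algebra_simps scaleR_conv_of_real)
  have czq: "cnj z * q = (1 - t) *\<^sub>R (cnj p * q) + t *\<^sub>R (cnj q * q)"
    unfolding t(3) by (simp add: algebra_simps scaleR_conv_of_real)
  have Re_cpz: "Re (cnj p * z) = (1 - t) * cmod p ^ 2 + t * Re (cnj p * q)" using cpz pp by simp
  have Im_cpz: "Im (cnj p * z) = t * Im (cnj p * q)" using cpz pp by simp
  have Im_czq: "Im (cnj z * q) = (1 - t) * Im (cnj p * q)" using czq qq by simp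
  have degen: "0 < Re (cnj p * z)" if "\<beta> = \<alpha>"
  proof -
    have "Re (cnj p * q) = cmod p * cmod q" using pq that by simp
    moreover have "0 < cmod p" "0 < cmod q" using p q by auto
    ultimately show ?thesis using Re_cpz t
      by (smt (verit) mult_nonneg_nonneg mult_pos_pos zero_less_power)
  qed
  have z0: "z \<noteq> 0"
  proof
    assume z0: "z = 0"
    show False
    proof (cases "t = 0")
      case True then show False using t p z0 by simp
    next
      case False
      have "Im (cnj p * q) = 0" using Im_cpz z0 False by simp
      then have "sin (\<beta> - \<alpha>) = 0" using pq p q by simp
      then have "\<beta> - \<alpha> = 0"
        using sin_gt_zero[of "\<beta> - \<alpha>"] le lt unfolding \<alpha>_def \<beta>_def by force
      then have "0 < Re (cnj p * z)" using degen by simp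
      then show False using z0 by simp
    qed
  qed
  define \<theta> where "\<theta> = Arg z"
  have pz: "Im (cnj p * z) = cmod p * cmod z * sin (\<theta> - \<alpha>)" "Re (cnj p * z) = cmod p * cmod z * cos (\<theta> - \<alpha>)"
    using cross_Arg[OF p z0] unfolding \<alpha>_def \<theta>_def by auto
  have zq: "Im (cnj z * q) = cmod z * cmod q * sin (\<beta> - \<theta>)"
    using cross_Arg[OF z0 q] unfolding \<beta>_def \<theta>_def by auto
  have pos: "0 < cmod p * cmod z" "0 < cmod z * cmod q" using p q z0 by auto
  have s1: "0 \<le> sin (\<theta> - \<alpha>)"
  proof -
    have "0 \<le> cmod p * cmod z * sin (\<theta> - \<alpha>)" using pz Im_cpz Impq t by simp
    then show ?thesis using pos by (simp add: zero_le_mult_iff)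
  qed
  have s2: "0 \<le> sin (\<beta> - \<theta>)"
  proof -
    have "0 \<le> cmod z * cmod q * sin (\<beta> - \<theta>)" using zq Im_czq Impq t by simp
    then show ?thesis using pos by (simp add: zero_le_mult_iff)
  qed
  have bnd: "-pi < \<alpha>" "\<alpha> \<le> pi" "-pi < \<beta>" "\<beta> \<le> pi" "-pi < \<theta>" "\<theta> \<le> pi"
    using Arg_bounded unfolding \<alpha>_def \<beta>_def \<theta>_def by auto
  have c1: "(0 \<le> \<theta> - \<alpha> \<and> \<theta> - \<alpha> \<le> pi) \<or> \<theta> - \<alpha> \<le> -pi"
    using sin_nonneg_cases[OF _ _ s1] bnd by auto
  have c2: "(0 \<le> \<beta> - \<theta> \<and> \<beta> - \<theta> \<le> pi) \<or> \<beta> - \<theta> \<le> -pi"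
    using sin_nonneg_cases[OF _ _ s2] bnd by auto
  have ab: "\<alpha> \<le> \<beta>" "\<beta> < \<alpha> + pi" using le lt unfolding \<alpha>_def \<beta>_def by auto
  have "\<alpha> \<le> \<theta> \<and> \<theta> \<le> \<beta>"
  proof (rule ccontr)
    assume nc: "\<not> ?thesis"
    have "\<beta> = \<alpha> \<and> (\<theta> - \<alpha> = pi \<or> \<theta> - \<alpha> = -pi)" using c1 c2 ab nc by auto
    then have "cos (\<theta> - \<alpha>) = -1" and ba: "\<beta> = \<alpha>" by auto
    then have "Re (cnj p * z) < 0" using pz pos by simp
    then show False using degen[OF ba] by simp
  qed
  then show ?thesis using z0 unfolding \<alpha>_def \<beta>_def \<theta>_def by auto
qed


lemma same_Arg:
  fixes a b :: complex
  assumes "a \<noteq> 0" "b \<noteq> 0" "Arg a = Arg b"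
  shows "a = (cmod a / cmod b) *\<^sub>R b"
proof -
  have ca: "a = of_real (cmod a) * cis (Arg b)" using rcis_cmod_Arg[of a] assms(3) by (simp add: rcis_def)
  have cb0: "of_real (cmod b) * cis (Arg b) = b" using rcis_cmod_Arg[of b] by (simp add: rcis_def)
  have nb: "(of_real (cmod b) :: complex) \<noteq> 0" using assms(2) by simp
  have cb: "cis (Arg b) = b / of_real (cmod b)"
    using cb0 nb by (metis nonzero_mult_div_cancel_left)
  have e: "(cmod a / cmod b) *\<^sub>R b = of_real (cmod a) * (b / of_real (cmod b))"
    by (simp add: scaleR_conv_of_real)
  have "a = of_real (cmod a) * (b / of_real (cmod b))" using ca unfolding cb .
  then show ?thesis using e by simp
qed

lemma zero_in_seg:
  fixes a b :: "'a::real_vector"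
  assumes "0 \<in> closed_segment a b" "a \<noteq> 0" "b \<noteq> 0"
  shows "\<exists>s>0. a = (- s) *\<^sub>R b"
proof -
  obtain t where t: "0 \<le> t" "t \<le> 1" "0 = (1 - t) *\<^sub>R a + t *\<^sub>R b"
    using assms(1) unfolding closed_segment_def by auto
  have t0: "t \<noteq> 0" using t assms by auto
  have t1: "t \<noteq> 1" using t assms by auto
  have e: "(1 - t) *\<^sub>R a = (- t) *\<^sub>R b" using t(3) by (simp add: eq_neg_iff_add_eq_0 add.commute)
  have "a = (1 / (1 - t)) *\<^sub>R ((1 - t) *\<^sub>R a)" using t1 by simp
  also have "\<dots> = (1 / (1 - t)) *\<^sub>R ((- t) *\<^sub>R b)" using e by simp
  also have "\<dots> = (- (t / (1 - t))) *\<^sub>R b" by simp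
  finally have "a = (- (t / (1 - t))) *\<^sub>R b" .
  then show ?thesis using t t0 t1 by (intro exI[of _ "t / (1 - t)"]) auto
qed

lemma three_not_opposite:
  fixes u v w :: "'a::real_vector"
  assumes "u \<noteq> 0" "v \<noteq> 0" "w \<noteq> 0"
    and "0 \<in> closed_segment u v" "0 \<in> closed_segment v w" "0 \<in> closed_segment u w"
  shows False
proof -
  obtain s1 where s1: "s1 > 0" "u = (- s1) *\<^sub>R v" using zero_in_seg assms by blast
  obtain s2 where s2: "s2 > 0" "v = (- s2) *\<^sub>R w" using zero_in_seg assms by blast
  obtain s3 where s3: "s3 > 0" "u = (- s3) *\<^sub>R w" using zero_in_seg assms by blast
  have "(s1 * s2) *\<^sub>R w = (- s3) *\<^sub>R w" using s1 s2 s3 by simp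
  then have "(s1 * s2 + s3) *\<^sub>R w = 0" by (simp add: algebra_simps)
  moreover have "s1 * s2 + s3 \<noteq> 0" using s1 s2 s3 by (smt (verit) mult_pos_pos)
  ultimately show False using assms by simp
qed

lemma planar_cone:
  fixes C :: "complex set"
  assumes cone: "\<And>z t. z \<in> C \<Longrightarrow> 0 < t \<Longrightarrow> t *\<^sub>R z \<in> C" and conn: "connected (C - {0})"
    and u: "u \<in> C - {0}" and v: "v \<in> C - {0}" and w: "w \<in> C - {0}"
  shows "(closed_segment u v \<subseteq> C \<and> 0 \<notin> closed_segment u v) \<or> (closed_segment v w \<subseteq> C \<and> 0 \<notin> closed_segment v w)
       \<or> (closed_segment u w \<subseteq> C \<and> 0 \<notin> closed_segment u w)"
proof (cases "\<forall>z. z \<noteq> 0 \<longrightarrow> z \<in> C")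
  case True
  have seg: "closed_segment a b \<subseteq> C" if "0 \<notin> closed_segment a b" for a b
  proof
    fix x assume "x \<in> closed_segment a b"
    then have "x \<noteq> 0" using that by auto
    then show "x \<in> C" using True by auto
  qed
  show ?thesis using three_not_opposite[of u v w] u v w seg by blast
next
  case False
  then obtain g where g: "g \<noteq> 0" "g \<notin> C" by auto
  define \<omega> where "\<omega> = - cnj g / of_real (cmod g)"
  have om_inv: "\<omega> * (- g / of_real (cmod g)) = 1"
  proof -
    have "cnj g * g = of_real (cmod g) * of_real (cmod g)"
      using complex_norm_square[of g] by (simp add: power2_eq_square mult.commute)
    then show ?thesis using g by (simp add: \<omega>_def field_simps)
  qed
  have om0: "\<omega> \<noteq> 0" using om_inv by auto
  define f where "f = (\<lambda>z. Arg (\<omega> * z))"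
  have notneg: "\<omega> * c \<notin> \<real>\<^sub>\<le>\<^sub>0" if c: "c \<in> C - {0}" for c
  proof
    assume "\<omega> * c \<in> \<real>\<^sub>\<le>\<^sub>0"
    then have r: "Re (\<omega> * c) \<le> 0" "Im (\<omega> * c) = 0" by (auto simp: complex_nonpos_Reals_iff)
    define r where "r = Re (\<omega> * c)"
    have oc: "\<omega> * c = of_real r" using r unfolding r_def by (simp add: complex_eq_iff)
    have "c = (- g / of_real (cmod g)) * (\<omega> * c)" using om_inv by (metis mult.assoc mult.commute mult_1)
    also have "\<dots> = (- r / cmod g) *\<^sub>R g" unfolding oc by (simp add: scaleR_conv_of_real)
    finally have cg: "c = (- r / cmod g) *\<^sub>R g" .
    have "r \<noteq> 0" using c oc om0 by auto
    then have rpos: "0 < - r / cmod g" using r g unfolding r_def by (simp add: divide_pos_pos)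
    have "g = (cmod g / - r) *\<^sub>R c" using cg rpos g \<open>r \<noteq> 0\<close> by simp
    moreover have "0 < cmod g / - r"
    proof -
      have "r < 0" using r(1) \<open>r \<noteq> 0\<close> unfolding r_def by simp
      then show ?thesis using g by (intro divide_pos_pos) auto
    qed
    ultimately have "g \<in> C" using cone[of c "cmod g / - r"] c by simp
    then show False using g by simp
  qed
  have fcont: "continuous_on (C - {0}) f"
  proof (rule continuous_at_imp_continuous_on, rule ballI)
    fix c assume c: "c \<in> C - {0}"
    have "continuous (at c) (\<lambda>z. \<omega> * z)" by (intro continuous_intros)
    moreover have "continuous (at (\<omega> * c)) Arg" using notneg[OF c] by (rule continuous_at_Arg)
    ultimately show "continuous (at c) f" unfolding f_def using continuous_at_compose[of c "\<lambda>z. \<omega> * z" Arg]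
      by (simp add: o_def)
  qed
  have Iint: "is_interval (f ` (C - {0}))"
    using connected_continuous_image[OF fcont conn] is_interval_connected_1 by blast
  have fbnd: "- pi < f c \<and> f c < pi" if "c \<in> C - {0}" for c
  proof -
    have "f c \<noteq> pi"
    proof
      assume "f c = pi"
      then have "Re (\<omega> * c) < 0" "Im (\<omega> * c) = 0" unfolding f_def by (auto simp: Arg_eq_pi)
      then show False using notneg[OF that] by (auto simp: complex_nonpos_Reals_iff)
    qed
    then show ?thesis using Arg_bounded[of "\<omega> * c"] unfolding f_def by auto
  qed
  have pair: "closed_segment p q \<subseteq> C \<and> 0 \<notin> closed_segment p q"
    if p: "p \<in> C - {0}" and q: "q \<in> C - {0}" and le: "f p \<le> f q" "f q < f p + pi" for p q
  proof -
    have pz: "\<omega> * p \<noteq> 0" "\<omega> * q \<noteq> 0" using p q om0 by auto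
    have main: "z \<noteq> 0 \<and> z \<in> C" if z: "z \<in> closed_segment p q" for z
    proof -
      obtain t where t: "0 \<le> t" "t \<le> 1" "z = (1 - t) *\<^sub>R p + t *\<^sub>R q"
        using z unfolding closed_segment_def by blast
      have "\<omega> * z = (1 - t) *\<^sub>R (\<omega> * p) + t *\<^sub>R (\<omega> * q)"
        unfolding t(3) by (simp only: scaleR_conv_of_real distrib_left mult.left_commute)
      then have zs: "\<omega> * z \<in> closed_segment (\<omega> * p) (\<omega> * q)"
        using t unfolding closed_segment_def by blast
      have le': "Arg (\<omega> * p) \<le> Arg (\<omega> * q)" "Arg (\<omega> * q) < Arg (\<omega> * p) + pi"
        using le unfolding f_def by auto
      have ab: "\<omega> * z \<noteq> 0" "f p \<le> f z" "f z \<le> f q"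
        using arg_between[OF pz le' zs] unfolding f_def by auto
      have z0: "z \<noteq> 0" using ab by auto
      have "f z \<in> f ` (C - {0})"
        using Iint ab(2,3) p q unfolding is_interval_1 by blast
      then obtain c where c: "c \<in> C - {0}" "f c = f z" by (metis imageE)
      have c0: "\<omega> * c \<noteq> 0" using c om0 by auto
      define k where "k = cmod (\<omega> * z) / cmod (\<omega> * c)"
      have "Arg (\<omega> * z) = Arg (\<omega> * c)" using c unfolding f_def by simp
      then have "\<omega> * z = k *\<^sub>R (\<omega> * c)"
        using same_Arg[OF ab(1) c0] unfolding k_def by blast
      then have "\<omega> * z = \<omega> * (k *\<^sub>R c)" by (simp only: scaleR_conv_of_real mult.left_commute)
      then have zk: "z = k *\<^sub>R c" using om0 by (rule mult_left_cancel[THEN iffD1, rotated])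
      have kpos: "0 < k" using ab(1) c0 unfolding k_def by simp
      have "z \<in> C" unfolding zk using cone[OF _ kpos] c by blast
      then show ?thesis using z0 by simp
    qed
    then show ?thesis by blast
  qed
  have fu: "- pi < f u \<and> f u < pi" and fv: "- pi < f v \<and> f v < pi" and fw: "- pi < f w \<and> f w < pi"
    using fbnd u v w by auto
  have key: "closed_segment p q \<subseteq> C \<and> 0 \<notin> closed_segment p q"
    if "p \<in> C - {0}" "q \<in> C - {0}" "\<bar>f p - f q\<bar> < pi" for p q
  proof (cases "f p \<le> f q")
    case True
    then show ?thesis using pair[OF that(1,2)] that(3) by simp
  next
    case False
    then have "closed_segment q p \<subseteq> C \<and> 0 \<notin> closed_segment q p"
      using pair[OF that(2,1)] that(3) by simp
    then show ?thesis by (simp add: closed_segment_commute)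
  qed
  have "\<bar>f u - f v\<bar> < pi \<or> \<bar>f v - f w\<bar> < pi \<or> \<bar>f u - f w\<bar> < pi"
    using fu fv fw by (smt (verit))
  then show ?thesis using key[OF u v] key[OF v w] key[OF u w] by blast
qed

lemma curve_part:
  assumes "0 \<le> t1" "t1 \<le> t0" "t0 \<le> t2" "t2 \<le> 1"
  shows "ereal (d (g 0) (g t1) + d (g t1) (g t0) + d (g t0) (g t2) + d (g t2) (g 1)) \<le> curve_length d g"
proof -
  define t where "t = (\<lambda>i::nat. if i = 0 then 0 else if i = 1 then t1 else if i = 2 then t0 else if i = 3 then t2 else (1::real))"
  have mem: "(4::nat, t) \<in> {(n, t::nat \<Rightarrow> real). t 0 = 0 \<and> t n = 1 \<and> (\<forall>i<n. t i \<le> t (Suc i))}"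
  proof -
    have "\<forall>i<4. t i \<le> t (Suc i)"
    proof (intro allI impI)
      fix i :: nat assume "i < 4"
      then have "i = 0 \<or> i = 1 \<or> i = 2 \<or> i = 3" by auto
      then show "t i \<le> t (Suc i)" using assms by (auto simp: t_def)
    qed
    then show ?thesis by (simp add: t_def)
  qed
  have sum: "(\<Sum>i < (4::nat). d (g (t i)) (g (t (Suc i)))) =
     d (g 0) (g t1) + d (g t1) (g t0) + d (g t0) (g t2) + d (g t2) (g 1)"
    by (simp add: t_def eval_nat_numeral)
  show ?thesis unfolding curve_length_def
    using SUP_upper[OF mem, of "\<lambda>nt. ereal (\<Sum>i < fst nt. d (g (snd nt i)) (g (snd nt (Suc i))))"] sum
    by simp
qed

lemma not_in_seg_strict:
  fixes u v x :: "'a::euclidean_space"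
  assumes "x \<notin> closed_segment u v"
  shows "dist u v < dist u x + dist x v"
proof -
  have "dist u v \<noteq> dist u x + dist x v" using assms between between_mem_segment by blast
  then show ?thesis using dist_triangle[of u v x] by simp
qed

lemma geo_contra:
  assumes P: "pl_disk P" and g: "geodesic_in P g"
    and t: "0 \<le> t1" "t1 \<le> t0" "t0 \<le> t2" "t2 \<le> 1"
    and u: "g t1 = u" and x: "g t0 = x0" and v: "g t2 = v"
    and seg: "closed_segment u v \<subseteq> P" and nx: "x0 \<notin> closed_segment u v"
  shows False
proof -
  have pc: "plconn P" using pl_disk_plconn[OF P] .
  have gP: "g s \<in> P" if "0 \<le> s" "s \<le> 1" for s
    using g that unfolding geodesic_in_def path_image_def by auto
  define A where "A = g 0"
  define B where "B = g 1"
  have inP: "A \<in> P" "B \<in> P" "u \<in> P" "v \<in> P" "x0 \<in> P"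
    using gP t u v x unfolding A_def B_def by auto
  have cl: "curve_length (dP P) g = ereal (dP P A B)"
    using g unfolding geodesic_in_def A_def B_def pathstart_def pathfinish_def by simp
  have 1: "dP P A u + dP P u x0 + dP P x0 v + dP P v B \<le> dP P A B"
    using curve_part[OF t, of "dP P" g] cl u v x unfolding A_def B_def by simp
  have 2: "dP P A B \<le> dP P A u + dP P u v + dP P v B"
    using dP_tri[OF pc inP(1,3,2)] dP_tri[OF pc inP(3,4,2)] by simp
  have 3: "dP P u v \<le> dist u v" using dP_le_dist[OF seg] .
  have 4: "dist u v < dist u x0 + dist x0 v" using not_in_seg_strict[OF nx] .
  have 5: "dist u x0 \<le> dP P u x0" "dist x0 v \<le> dP P x0 v"
    using dP_ge_dist[OF pc] inP by auto
  show False using 1 2 3 4 5 by linarith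
qed

lemma finite_min_radius:
  fixes Q :: "'a \<Rightarrow> real \<Rightarrow> bool"
  assumes "finite F" "\<forall>h\<in>F. \<exists>r>0. Q h r"
    and mono: "\<And>h r r'. Q h r \<Longrightarrow> 0 < r' \<Longrightarrow> r' \<le> r \<Longrightarrow> Q h r'"
  shows "\<exists>r>0. \<forall>h\<in>F. Q h r"
  using assms(1,2)
proof (induction F rule: finite_induct)
  case empty then show ?case by (intro exI[of _ 1]) auto
next
  case (insert h F)
  obtain r1 where r1: "r1 > 0" "\<forall>h\<in>F. Q h r1" using insert by auto
  obtain r2 where r2: "r2 > 0" "Q h r2" using insert by auto
  show ?case
    using r1 r2 mono[of _ r1 "min r1 r2"] mono[of h r2 "min r1 r2"]
    by (intro exI[of _ "min r1 r2"]) auto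
qed

definition radial_at :: "'a::real_normed_vector set \<Rightarrow> 'a \<Rightarrow> real \<Rightarrow> bool" where
  "radial_at S x0 r \<longleftrightarrow> (\<forall>y\<in>S. \<forall>t\<ge>0. dist x0 (x0 + t *\<^sub>R (y - x0)) < r \<longrightarrow> x0 + t *\<^sub>R (y - x0) \<in> S)"

lemma radial_halfspace:
  fixes x0 :: "'a::euclidean_space"
  assumes "a \<noteq> 0" "a \<bullet> x0 \<le> b"
  shows "\<exists>r>0. radial_at {x. a \<bullet> x \<le> b} x0 r"
proof (cases "a \<bullet> x0 = b")
  case True
  show ?thesis
  proof (intro exI[of _ 1] conjI)
    show "radial_at {x. a \<bullet> x \<le> b} x0 1" unfolding radial_at_def
    proof (intro ballI allI impI)
      fix y and t :: real assume y: "y \<in> {x. a \<bullet> x \<le> b}" and t: "0 \<le> t"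
      have "a \<bullet> (x0 + t *\<^sub>R (y - x0)) = b + t * (a \<bullet> y - b)"
        using True by (simp add: inner_add_right inner_diff_right)
      also have "\<dots> \<le> b" using y t by (simp add: mult_nonneg_nonpos)
      finally show "x0 + t *\<^sub>R (y - x0) \<in> {x. a \<bullet> x \<le> b}" by simp
    qed
  qed simp
next
  case False
  then have lt: "a \<bullet> x0 < b" using assms by simp
  define r where "r = (b - a \<bullet> x0) / norm a"
  have rpos: "r > 0" unfolding r_def using lt assms by simp
  show ?thesis
  proof (intro exI[of _ r] conjI rpos)
    show "radial_at {x. a \<bullet> x \<le> b} x0 r" unfolding radial_at_def
    proof (intro ballI allI impI)
      fix y and t :: real assume "dist x0 (x0 + t *\<^sub>R (y - x0)) < r"
      then have d: "norm (t *\<^sub>R (y - x0)) < r" by (simp add: dist_norm)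
      have "a \<bullet> (t *\<^sub>R (y - x0)) \<le> norm a * norm (t *\<^sub>R (y - x0))" by (rule norm_cauchy_schwarz)
      also have "\<dots> < norm a * r" using d assms by simp
      also have "\<dots> = b - a \<bullet> x0" unfolding r_def using assms by simp
      finally show "x0 + t *\<^sub>R (y - x0) \<in> {x. a \<bullet> x \<le> b}" by (simp add: inner_add_right)
    qed
  qed
qed

lemma radial_polyhedron:
  fixes x0 :: "'a::euclidean_space"
  assumes "polyhedron S" "x0 \<in> S"
  shows "\<exists>r>0. radial_at S x0 r"
proof -
  obtain F where F: "finite F" "S = \<Inter>F" "\<forall>h\<in>F. \<exists>a b. a \<noteq> 0 \<and> h = {x. a \<bullet> x \<le> b}"
    using assms(1) unfolding polyhedron_def by blast
  have "\<forall>h\<in>F. \<exists>r>0. radial_at h x0 r"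
  proof
    fix h assume h: "h \<in> F"
    then obtain a b where ab: "a \<noteq> 0" "h = {x. a \<bullet> x \<le> b}" using F by blast
    have "x0 \<in> h" using assms(2) F(2) h by auto
    then show "\<exists>r>0. radial_at h x0 r" using radial_halfspace[OF ab(1)] ab by auto
  qed
  moreover have "radial_at h x0 r'" if "radial_at h x0 r" "0 < r'" "r' \<le> r" for h r r'
    using that unfolding radial_at_def by (meson order_less_le_trans)
  ultimately obtain r where r: "r > 0" "\<forall>h\<in>F. radial_at h x0 r"
    using finite_min_radius[OF F(1), of "\<lambda>h r. radial_at h x0 r"] by blast
  have "radial_at S x0 r" using r(2) F(2) unfolding radial_at_def by blast
  then show ?thesis using r(1) by blast
qed

lemma tri_props:
  fixes u v w :: "'a::euclidean_space"
  shows "polyhedron (convex hull {u, v, w})" "closed (convex hull {u, v, w})"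
proof -
  have f: "finite {u, v, w}" by simp
  show "polyhedron (convex hull {u, v, w})" using polytope_imp_polyhedron[OF polytope_convex_hull[OF f]] .
  show "closed (convex hull {u, v, w})" using compact_imp_closed[OF compact_convex_hull[OF finite_imp_compact[OF f]]] .
qed

lemma pl_disk_radial:
  assumes "pl_disk P" "x0 \<in> P"
  shows "\<exists>r>0. \<forall>y\<in>P \<inter> ball x0 r. \<forall>t\<ge>0. x0 + t *\<^sub>R (y - x0) \<in> ball x0 r \<longrightarrow> x0 + t *\<^sub>R (y - x0) \<in> P"
proof -
  obtain \<T> where T: "finite \<T>" "\<forall>S\<in>\<T>. \<exists>u v w. S = convex hull {u, v, w}" "P = \<Union>\<T>"
    using assms unfolding pl_disk_def by blast
  define Q where "Q = (\<lambda>S r. (x0 \<in> S \<longrightarrow> radial_at S x0 r) \<and> (x0 \<notin> S \<longrightarrow> ball x0 r \<inter> S = {}))"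
  have "\<forall>S\<in>\<T>. \<exists>r>0. Q S r"
  proof
    fix S assume S: "S \<in> \<T>"
    then obtain u v w where uvw: "S = convex hull {u, v, w}" using T by blast
    have ph: "polyhedron S" and cl: "closed S" unfolding uvw by (rule tri_props)+
    show "\<exists>r>0. Q S r"
    proof (cases "x0 \<in> S")
      case True
      obtain r where "r > 0" "radial_at S x0 r" using radial_polyhedron[OF ph True] by blast
      then show ?thesis using True unfolding Q_def by blast
    next
      case False
      have "open (- S)" using cl by (simp add: open_Compl)
      then obtain r where r: "r > 0" "ball x0 r \<subseteq> - S" using False open_contains_ball by blast
      then have "ball x0 r \<inter> S = {}" by blast
      then show ?thesis using False r(1) unfolding Q_def by blast
    qed
  qed
  moreover have "Q S r'" if "Q S r" "0 < r'" "r' \<le> r" for S r r'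
  proof -
    have "radial_at S x0 r \<Longrightarrow> radial_at S x0 r'" using that(3) unfolding radial_at_def
      by (meson order_less_le_trans)
    moreover have "ball x0 r' \<subseteq> ball x0 r" using that by (simp add: subset_ball)
    ultimately show ?thesis using that(1) unfolding Q_def by blast
  qed
  ultimately obtain r where r: "r > 0" "\<forall>S\<in>\<T>. Q S r"
    using finite_min_radius[OF T(1), of Q] by blast
  show ?thesis
  proof (intro exI[of _ r] conjI r(1) ballI allI impI)
    fix y and t :: real assume y: "y \<in> P \<inter> ball x0 r" and t: "0 \<le> t" and z: "x0 + t *\<^sub>R (y - x0) \<in> ball x0 r"
    obtain S where S: "S \<in> \<T>" "y \<in> S" using y T(3) by blast
    have QS: "Q S r" using r(2) S(1) by blast
    have "x0 \<in> S"
    proof (rule ccontr)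
      assume "x0 \<notin> S"
      then have "ball x0 r \<inter> S = {}" using QS unfolding Q_def by blast
      then show False using y S by blast
    qed
    then have "radial_at S x0 r" using QS unfolding Q_def by blast
    then have "x0 + t *\<^sub>R (y - x0) \<in> S" using S t z unfolding radial_at_def by (simp add: dist_commute)
    then show "x0 + t *\<^sub>R (y - x0) \<in> P" using S T(3) by blast
  qed
qed


definition coneP :: "(real^2) set \<Rightarrow> real^2 \<Rightarrow> real \<Rightarrow> (real^2) set" where
  "coneP P x0 r0 = {c. \<exists>t>0. x0 + t *\<^sub>R c \<in> P \<inter> ball x0 r0}"

lemma coneP_cone: "c \<in> coneP P x0 r0 \<Longrightarrow> 0 < l \<Longrightarrow> l *\<^sub>R c \<in> coneP P x0 r0"
proof -
  assume c: "c \<in> coneP P x0 r0" and l: "0 < l"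
  then obtain t where t: "t > 0" "x0 + t *\<^sub>R c \<in> P \<inter> ball x0 r0" unfolding coneP_def by blast
  have "x0 + (t / l) *\<^sub>R (l *\<^sub>R c) = x0 + t *\<^sub>R c" using l by simp
  then show ?thesis unfolding coneP_def using t l by (intro CollectI exI[of _ "t / l"]) auto
qed

lemma coneP_memb:
  assumes rad: "\<forall>y\<in>P \<inter> ball x0 r0. \<forall>t\<ge>0. x0 + t *\<^sub>R (y - x0) \<in> ball x0 r0 \<longrightarrow> x0 + t *\<^sub>R (y - x0) \<in> P"
    and c: "c \<in> coneP P x0 r0" and s: "0 \<le> s" "norm (s *\<^sub>R c) < r0"
  shows "x0 + s *\<^sub>R c \<in> P"
proof -
  obtain t where t: "t > 0" "x0 + t *\<^sub>R c \<in> P \<inter> ball x0 r0" using c unfolding coneP_def by blast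
  define y where "y = x0 + t *\<^sub>R c"
  have e: "x0 + (s / t) *\<^sub>R (y - x0) = x0 + s *\<^sub>R c" unfolding y_def using t by simp
  have "x0 + s *\<^sub>R c \<in> ball x0 r0" using s by (simp add: dist_norm)
  then show ?thesis using rad t s e unfolding y_def[symmetric]
    by (metis divide_nonneg_pos)
qed

lemma coneP_in: "y \<in> P \<inter> ball x0 r0 \<Longrightarrow> y - x0 \<in> coneP P x0 r0"
  unfolding coneP_def by (intro CollectI exI[of _ 1]) auto

lemma coneP_conn:
  assumes P: "pl_disk P" and x0: "x0 \<in> P" and r0: "r0 > 0"
    and rad: "\<forall>y\<in>P \<inter> ball x0 r0. \<forall>t\<ge>0. x0 + t *\<^sub>R (y - x0) \<in> ball x0 r0 \<longrightarrow> x0 + t *\<^sub>R (y - x0) \<in> P"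
  shows "connected (coneP P x0 r0 - {0})"
proof -
  define C where "C = coneP P x0 r0"
  have "cball (0::real^2) 1 homeomorphic P" using P unfolding pl_disk_def using homeomorphic_sym by blast
  then obtain h k where hk: "homeomorphism (cball (0::real^2) 1) P h k" unfolding homeomorphic_def by blast
  have hk1: "\<And>x. x \<in> cball 0 1 \<Longrightarrow> k (h x) = x" "h ` cball 0 1 = P" "continuous_on (cball 0 1) h"
    "\<And>y. y \<in> P \<Longrightarrow> h (k y) = y" "k ` P = cball 0 1" "continuous_on P k"
    using hk unfolding homeomorphism_def by auto
  define p where "p = k x0"
  have p: "p \<in> cball 0 1" "h p = x0" using hk1 x0 unfolding p_def by auto
  obtain e where e: "e > 0" "\<And>z. z \<in> cball 0 1 \<Longrightarrow> dist z p < e \<Longrightarrow> dist (h z) (h p) < r0"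
    using hk1(3) p(1) r0 unfolding continuous_on_iff by metis
  define B where "B = cball (0::real^2) 1 \<inter> ball p e"
  have cvB: "convex B" unfolding B_def by (simp add: convex_Int)
  define m where "m = min (1/2) (e/2)"
  define q where "q = (1 - m) *\<^sub>R p"
  have m: "0 < m" "m \<le> 1/2" "m < e" using e unfolding m_def by auto
  have q1: "q \<in> ball 0 1"
  proof -
    have "norm q = (1 - m) * norm p" unfolding q_def using m by simp
    also have "\<dots> \<le> 1 - m" using p(1) m by (simp add: mult_left_le)
    finally show ?thesis using m by simp
  qed
  have q2: "q \<in> ball p e"
  proof -
    have "p - q = m *\<^sub>R p" unfolding q_def by (simp add: algebra_simps)
    then have "dist p q = m * norm p" using m by (simp add: dist_norm)
    also have "\<dots> \<le> m" using p(1) m by (simp add: mult_left_le)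
    finally show ?thesis using m by simp
  qed
  have intB: "interior B \<noteq> {}"
  proof -
    have "ball 0 1 \<inter> ball p e \<subseteq> interior B"
      unfolding B_def by (rule interior_maximal) (auto simp: open_Int)
    then show ?thesis using q1 q2 by blast
  qed
  have affB: "aff_dim B \<noteq> 1" using aff_dim_nonempty_interior[OF intB] by simp
  have cB: "connected (B - {p})" by (rule connected_punctured_convex[OF cvB affB])
  have Bne: "B - {p} \<noteq> {}"
  proof
    assume "B - {p} = {}"
    then have "B \<subseteq> {p}" by blast
    then have "interior B \<subseteq> interior {p}" by (rule interior_mono)
    then show False using intB by simp
  qed
  define N where "N = h ` B"
  have NB: "h ` (B - {p}) = N - {x0}"
  proof
    show "h ` (B - {p}) \<subseteq> N - {x0}"
    proof
      fix y assume "y \<in> h ` (B - {p})"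
      then obtain z where z: "z \<in> B" "z \<noteq> p" "y = h z" by blast
      have "h z \<noteq> x0"
      proof
        assume "h z = x0"
        then have "k (h z) = p" unfolding p_def by simp
        then show False using z hk1(1) unfolding B_def by auto
      qed
      then show "y \<in> N - {x0}" using z unfolding N_def by blast
    qed
    show "N - {x0} \<subseteq> h ` (B - {p})" unfolding N_def using p(2) by blast
  qed
  have cN: "connected (N - {x0})"
  proof -
    have "continuous_on (B - {p}) h" using hk1(3) by (rule continuous_on_subset) (auto simp: B_def)
    then show ?thesis using connected_continuous_image[OF _ cB] NB by metis
  qed
  have NP: "N \<subseteq> P \<inter> ball x0 r0"
  proof
    fix y assume "y \<in> N"
    then obtain z where z: "z \<in> B" "y = h z" unfolding N_def by blast
    have "dist (h z) x0 < r0" using e(2)[of z] z p unfolding B_def by (auto simp: dist_commute)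
    moreover have "h z \<in> P" using hk1(2) z unfolding B_def by blast
    ultimately show "y \<in> P \<inter> ball x0 r0" using z by (simp add: dist_commute)
  qed
  obtain \<rho> where rho: "\<rho> > 0" "\<And>y. y \<in> P \<Longrightarrow> dist y x0 < \<rho> \<Longrightarrow> dist (k y) (k x0) < e"
    using hk1(6) x0 e(1) unfolding continuous_on_iff by metis
  have inN: "y \<in> N" if "y \<in> P" "dist y x0 < \<rho>" for y
  proof -
    have "k y \<in> cball 0 1" using hk1(5) that by blast
    moreover have "dist (k y) p < e" using rho(2)[OF that] unfolding p_def .
    ultimately have "k y \<in> B" unfolding B_def by (simp add: dist_commute)
    then show ?thesis unfolding N_def using hk1(4)[OF that(1)] by (metis image_eqI)
  qed
  define M where "M = (\<lambda>y. y - x0) ` (N - {x0})"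
  have cM: "connected M" unfolding M_def by (intro connected_continuous_image[OF _ cN] continuous_intros)
  have MC: "M \<subseteq> C - {0}"
    using NP unfolding M_def C_def by (auto intro: coneP_in)
  have Mne: "M \<noteq> {}" using Bne NB unfolding M_def by auto
  then obtain m0 where m0: "m0 \<in> M" by blast
  define R where "R = (\<lambda>s. s *\<^sub>R m0) ` {0::real<..}"
  have cR: "connected R" unfolding R_def by (intro connected_continuous_image[OF _ connected_Ioi] continuous_intros)
  have RC: "R \<subseteq> C - {0}"
  proof
    fix z assume "z \<in> R"
    then obtain s where s: "s > 0" "z = s *\<^sub>R m0" unfolding R_def by auto
    have "m0 \<in> C" "m0 \<noteq> 0" using m0 MC by auto
    then show "z \<in> C - {0}" using s coneP_cone[of m0 P x0 r0 s] unfolding C_def by auto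
  qed
  define F where "F = (\<lambda>t. (\<lambda>z. t *\<^sub>R z) ` M \<union> R) ` {0::real<..}"
  have "connected (\<Union>F)"
  proof (rule connected_Union)
    fix S assume "S \<in> F"
    then obtain t where t: "t > 0" "S = (\<lambda>z. t *\<^sub>R z) ` M \<union> R" unfolding F_def by auto
    have c1: "connected ((\<lambda>z. t *\<^sub>R z) ` M)" by (intro connected_continuous_image[OF _ cM] continuous_intros)
    have "t *\<^sub>R m0 \<in> (\<lambda>z. t *\<^sub>R z) ` M \<inter> R" using m0 t unfolding R_def by auto
    then show "connected S" unfolding t(2) using connected_Un[OF c1 cR] by blast
  next
    have "m0 \<in> R" unfolding R_def by (rule image_eqI[of _ _ 1]) auto
    then have "m0 \<in> \<Inter>F" unfolding F_def by auto
    then show "\<Inter>F \<noteq> {}" by blast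
  qed
  moreover have "\<Union>F = C - {0}"
  proof
    show "\<Union>F \<subseteq> C - {0}"
    proof
      fix z assume "z \<in> \<Union>F"
      then obtain t where t: "t > 0" "z \<in> (\<lambda>z. t *\<^sub>R z) ` M \<union> R" unfolding F_def by blast
      show "z \<in> C - {0}"
      proof (cases "z \<in> R")
        case True then show ?thesis using RC by blast
      next
        case False
        then obtain y where y: "y \<in> M" "z = t *\<^sub>R y" using t by blast
        then show ?thesis using MC coneP_cone[of y P x0 r0 t] t unfolding C_def by auto
      qed
    qed
    show "C - {0} \<subseteq> \<Union>F"
    proof
      fix c assume c: "c \<in> C - {0}"
      define s where "s = min \<rho> r0 / (2 * norm c)"
      have nc: "norm c > 0" using c by simp
      have s: "s > 0" unfolding s_def using nc rho r0 by simp
      have ns: "norm (s *\<^sub>R c) = min \<rho> r0 / 2" unfolding s_def using nc rho r0 by simp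
      have "x0 + s *\<^sub>R c \<in> P"
        using coneP_memb[OF rad, of c s] c s ns r0 rho unfolding C_def by auto
      moreover have "dist (x0 + s *\<^sub>R c) x0 < \<rho>" using ns rho r0 by (simp add: dist_norm)
      ultimately have "x0 + s *\<^sub>R c \<in> N" by (rule inN)
      moreover have "x0 + s *\<^sub>R c \<noteq> x0" using s c by simp
      ultimately have "s *\<^sub>R c \<in> M" unfolding M_def by (intro image_eqI[of _ _ "x0 + s *\<^sub>R c"]) auto
      then have "(1 / s) *\<^sub>R (s *\<^sub>R c) \<in> (\<lambda>z. (1/s) *\<^sub>R z) ` M \<union> R" by blast
      then have "c \<in> (\<lambda>z. (1/s) *\<^sub>R z) ` M \<union> R" using s by simp
      moreover have "1 / s > 0" using s by simp
      ultimately show "c \<in> \<Union>F" unfolding F_def by blast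
    qed
  qed
  ultimately show ?thesis unfolding C_def by simp
qed


definition iota :: "real^2 \<Rightarrow> complex" where
  "iota v = Complex (v$1) (v$2)"

lemma iota_linear: "linear iota"
  by (rule linearI) (simp_all add: iota_def complex_eq_iff)

lemma iota_inj: "inj iota"
proof (rule injI)
  fix x y assume "iota x = iota y"
  then have "x$1 = y$1" "x$2 = y$2" by (auto simp: iota_def complex_eq_iff)
  then show "x = y" by (simp add: vec_eq_iff forall_2)
qed

lemma iota_0: "iota 0 = 0" by (simp add: iota_def complex_eq_iff)

lemma iota_scale: "iota (t *\<^sub>R x) = t *\<^sub>R iota x"
  using linear_scale[OF iota_linear] by simp

lemma planar_cone_R2:
  fixes C :: "(real^2) set"
  assumes cone: "\<And>z t. z \<in> C \<Longrightarrow> 0 < t \<Longrightarrow> t *\<^sub>R z \<in> C" and conn: "connected (C - {0})"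
    and u: "u \<in> C - {0}" and v: "v \<in> C - {0}" and w: "w \<in> C - {0}"
  shows "(closed_segment u v \<subseteq> C \<and> 0 \<notin> closed_segment u v) \<or> (closed_segment v w \<subseteq> C \<and> 0 \<notin> closed_segment v w)
       \<or> (closed_segment u w \<subseteq> C \<and> 0 \<notin> closed_segment u w)"
proof -
  define C' where "C' = iota ` C"
  have cone': "t *\<^sub>R z \<in> C'" if zt: "z \<in> C'" "0 < t" for z t
  proof -
    obtain c where "c \<in> C" "z = iota c" using zt unfolding C'_def by blast
    then show ?thesis using cone[of c t] zt iota_scale[of t c] unfolding C'_def by (metis image_eqI)
  qed
  have img: "iota ` (C - {0}) = C' - {0}"
    unfolding C'_def using iota_inj iota_0 by (auto simp: inj_eq) (metis injD iota_0 iota_inj)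
  have conn': "connected (C' - {0})"
  proof -
    have "continuous_on (C - {0}) iota"
      using iota_linear by (intro linear_continuous_on) (simp add: linear_conv_bounded_linear)
    then show ?thesis using connected_continuous_image[OF _ conn] img by metis
  qed
  have tr: "closed_segment a b \<subseteq> C \<and> 0 \<notin> closed_segment a b"
    if hyp: "closed_segment (iota a) (iota b) \<subseteq> C' \<and> 0 \<notin> closed_segment (iota a) (iota b)" for a b
  proof -
    have seg: "closed_segment (iota a) (iota b) = iota ` closed_segment a b"
      using closed_segment_linear_image[OF iota_linear] by simp
    have "closed_segment a b \<subseteq> C"
    proof
      fix z assume "z \<in> closed_segment a b"
      then have "iota z \<in> C'" using hyp seg by auto
      then show "z \<in> C" unfolding C'_def using iota_inj by (auto simp: inj_eq)
    qed
    moreover have "0 \<notin> closed_segment a b" using hyp seg iota_0 by (metis image_eqI)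
    ultimately show ?thesis by blast
  qed
  have "iota u \<in> C' - {0}" "iota v \<in> C' - {0}" "iota w \<in> C' - {0}"
    using u v w img by auto
  from planar_cone[OF cone' conn' this] show ?thesis using tr by blast
qed

definition good_pair :: "(real^2) set \<Rightarrow> real^2 \<Rightarrow> real^2 \<Rightarrow> real^2 \<Rightarrow> bool" where
  "good_pair P x0 a b \<longleftrightarrow> closed_segment a b \<subseteq> P \<and> x0 \<notin> closed_segment a b"

lemma local_lemma:
  assumes P: "pl_disk P" and x0: "x0 \<in> P"
  shows "\<exists>r>0. \<forall>u v w. u \<in> P \<inter> ball x0 r - {x0} \<longrightarrow> v \<in> P \<inter> ball x0 r - {x0} \<longrightarrow> w \<in> P \<inter> ball x0 r - {x0} \<longrightarrow>
     good_pair P x0 u v \<or> good_pair P x0 v w \<or> good_pair P x0 u w"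
proof -
  obtain r0 where r0: "r0 > 0"
    and rad: "\<forall>y\<in>P \<inter> ball x0 r0. \<forall>t\<ge>0. x0 + t *\<^sub>R (y - x0) \<in> ball x0 r0 \<longrightarrow> x0 + t *\<^sub>R (y - x0) \<in> P"
    using pl_disk_radial[OF P x0] by blast
  define C where "C = coneP P x0 r0"
  have conn: "connected (C - {0})" unfolding C_def by (rule coneP_conn[OF P x0 r0 rad])
  have cone: "\<And>z t. z \<in> C \<Longrightarrow> 0 < t \<Longrightarrow> t *\<^sub>R z \<in> C" unfolding C_def by (rule coneP_cone)
  have inC: "y - x0 \<in> C - {0}" if "y \<in> P \<inter> ball x0 r0 - {x0}" for y
    using coneP_in[of y P x0 r0] that unfolding C_def by auto
  have bk: "good_pair P x0 a b"
    if ab: "a \<in> P \<inter> ball x0 r0 - {x0}" "b \<in> P \<inter> ball x0 r0 - {x0}"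
      and sg: "closed_segment (a - x0) (b - x0) \<subseteq> C \<and> 0 \<notin> closed_segment (a - x0) (b - x0)" for a b
  proof -
    have tr: "closed_segment a b = (\<lambda>z. x0 + z) ` closed_segment (a - x0) (b - x0)"
      using closed_segment_translation[of x0 "a - x0" "b - x0"] by simp
    have "closed_segment a b \<subseteq> P"
    proof
      fix z assume z: "z \<in> closed_segment a b"
      have zb: "z \<in> ball x0 r0" using z ab convex_ball[of x0 r0] closed_segment_subset[of a "ball x0 r0" b] by auto
      have "z - x0 \<in> C" using z tr sg by auto
      moreover have "norm (1 *\<^sub>R (z - x0)) < r0" using zb by (simp add: dist_norm norm_minus_commute)
      ultimately have "x0 + 1 *\<^sub>R (z - x0) \<in> P" using coneP_memb[OF rad, of "z - x0" 1] unfolding C_def by simp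
      then show "z \<in> P" by simp
    qed
    moreover have "x0 \<notin> closed_segment a b"
    proof
      assume "x0 \<in> closed_segment a b"
      then have "x0 - x0 \<in> closed_segment (a - x0) (b - x0)" using tr by auto
      then show False using sg by simp
    qed
    ultimately show ?thesis unfolding good_pair_def by blast
  qed
  show ?thesis
  proof (intro exI[of _ r0] conjI r0 allI impI)
    fix u v w assume u: "u \<in> P \<inter> ball x0 r0 - {x0}" and v: "v \<in> P \<inter> ball x0 r0 - {x0}" and w: "w \<in> P \<inter> ball x0 r0 - {x0}"
    from planar_cone_R2[OF cone conn inC[OF u] inC[OF v] inC[OF w]]
    show "good_pair P x0 u v \<or> good_pair P x0 v w \<or> good_pair P x0 u w"
      using bk u v w by blast
  qed
qed

definition ea :: "real^2" where "ea = vector [1, 0]"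
definition eb :: "real^2" where "eb = vector [0, 1]"

lemma ea_comp [simp]: "ea $ 1 = 1" "ea $ 2 = 0" by (simp_all add: ea_def)
lemma eb_comp [simp]: "eb $ 1 = 0" "eb $ 2 = 1" by (simp_all add: eb_def)

lemma vec2_eq: "(x::real^2) = y \<longleftrightarrow> x$1 = y$1 \<and> x$2 = y$2"
  by (simp add: vec_eq_iff forall_2)

lemma S_alt: "standard_triod = (\<lambda>t. t *\<^sub>R ea) ` {-1..1} \<union> (\<lambda>t. t *\<^sub>R eb) ` {0..1}"
proof -
  have 1: "vector [t, 0] = t *\<^sub>R ea" for t :: real by (simp add: vec2_eq)
  have 2: "vector [0, t] = t *\<^sub>R eb" for t :: real by (simp add: vec2_eq)
  show ?thesis unfolding standard_triod_def 1 2 by auto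
qed

definition e :: "nat \<Rightarrow> real^2" where
  "e i = (if i = 0 then (-1) *\<^sub>R ea else if i = 1 then ea else eb)"

definition q :: "nat \<Rightarrow> real \<Rightarrow> real^2" where
  "q i s = (if i = 0 then (-s) *\<^sub>R ea else if i = 1 then s *\<^sub>R ea else s *\<^sub>R eb)"

definition pos :: "nat \<Rightarrow> real^2 \<Rightarrow> real" where
  "pos i z = (if i = 0 then - z$1 - z$2 else if i = 1 then z$1 - z$2 else z$2 - \<bar>z$1\<bar>)"

lemma norm_ea [simp]: "norm ea = 1" by (simp add: norm_vec_def L2_set_def sum_2)
lemma norm_eb [simp]: "norm eb = 1" by (simp add: norm_vec_def L2_set_def sum_2)

lemma i3: "(i::nat) < 3 \<Longrightarrow> i = 0 \<or> i = 1 \<or> i = 2" by auto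

lemma S_cases:
  assumes "z \<in> standard_triod"
  obtains t where "-1 \<le> t" "t \<le> 1" "z = t *\<^sub>R ea" | t where "0 \<le> t" "t \<le> 1" "z = t *\<^sub>R eb"
  using assms unfolding S_alt by auto

lemma e_in: "i < 3 \<Longrightarrow> e i \<in> standard_triod"
  unfolding S_alt e_def by (drule i3) (auto intro: image_eqI[of _ _ "-1"] image_eqI[of _ _ 1])

lemma zero_in: "0 \<in> standard_triod"
  unfolding S_alt by (auto intro: image_eqI[of _ _ 0])

lemma q_in: "i < 3 \<Longrightarrow> 0 \<le> s \<Longrightarrow> s \<le> 1 \<Longrightarrow> q i s \<in> standard_triod"
  unfolding S_alt q_def by (drule i3) (auto intro: image_eqI[of _ _ "-s"] image_eqI[of _ _ s])

lemma q_norm: "i < 3 \<Longrightarrow> 0 \<le> s \<Longrightarrow> norm (q i s) = s"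
  unfolding q_def by (drule i3) auto

lemma q_ne0: "i < 3 \<Longrightarrow> 0 < s \<Longrightarrow> q i s \<noteq> 0"
  using q_norm[of i s] by force

lemma pos_e: "i < 3 \<Longrightarrow> j < 3 \<Longrightarrow> pos i (e j) = (if i = j then 1 else -1)"
  unfolding pos_def by (drule i3, drule i3) (auto simp: e_def)

lemma pos_zero: "i < 3 \<Longrightarrow> z \<in> standard_triod \<Longrightarrow> pos i z = 0 \<Longrightarrow> z = 0"
  unfolding pos_def by (erule S_cases) (drule i3; auto)+

lemma pos_s: "i < 3 \<Longrightarrow> z \<in> standard_triod \<Longrightarrow> 0 < s \<Longrightarrow> pos i z = s \<Longrightarrow> z = q i s"
  unfolding pos_def q_def by (erule S_cases) (drule i3; auto)+

lemma pos_cont: "i < 3 \<Longrightarrow> continuous_on A (pos i)"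
  unfolding pos_def by (drule i3) (auto intro!: continuous_intros)

lemma e_inj: "i < 3 \<Longrightarrow> j < 3 \<Longrightarrow> e i = e j \<Longrightarrow> i = j"
  unfolding e_def by (drule i3, drule i3) (auto simp: vec2_eq)

lemma conn_lines:
  fixes I J :: "real set"
  assumes "is_interval I" "is_interval J" "0 \<in> I" "0 \<in> J"
  shows "connected ((\<lambda>t. t *\<^sub>R (a::real^2)) ` I \<union> (\<lambda>t. t *\<^sub>R b) ` J)"
proof (rule connected_Un)
  show "connected ((\<lambda>t. t *\<^sub>R a) ` I)"
    by (intro connected_continuous_image[OF _ is_interval_connected[OF assms(1)]] continuous_intros)
  show "connected ((\<lambda>t. t *\<^sub>R b) ` J)"
    by (intro connected_continuous_image[OF _ is_interval_connected[OF assms(2)]] continuous_intros)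
  have "0 \<in> (\<lambda>t. t *\<^sub>R a) ` I" "0 \<in> (\<lambda>t. t *\<^sub>R b) ` J"
    using assms by (auto intro: image_eqI[of _ _ 0])
  then show "(\<lambda>t. t *\<^sub>R a) ` I \<inter> (\<lambda>t. t *\<^sub>R b) ` J \<noteq> {}" by blast
qed

lemma conn_minus_e: "i < 3 \<Longrightarrow> connected (standard_triod - {e i})"
proof -
  assume "i < 3"
  then consider "i = 0" | "i = 1" | "i = 2" by linarith
  then show ?thesis
  proof cases
    case 1
    have "standard_triod - {e i} = (\<lambda>t. t *\<^sub>R ea) ` {-1<..1} \<union> (\<lambda>t. t *\<^sub>R eb) ` {0..1}"
      unfolding S_alt 1 e_def by (auto simp: vec2_eq)
    then show ?thesis using conn_lines[of "{-1<..1}" "{0..1}"] by (auto simp: is_interval_1)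
  next
    case 2
    have "standard_triod - {e i} = (\<lambda>t. t *\<^sub>R ea) ` {-1..<1} \<union> (\<lambda>t. t *\<^sub>R eb) ` {0..1}"
      unfolding S_alt 2 e_def by (auto simp: vec2_eq)
    then show ?thesis using conn_lines[of "{-1..<1}" "{0..1}"] by (auto simp: is_interval_1)
  next
    case 3
    have "standard_triod - {e i} = (\<lambda>t. t *\<^sub>R ea) ` {-1..1} \<union> (\<lambda>t. t *\<^sub>R eb) ` {0..<1}"
      unfolding S_alt 3 e_def by (auto simp: vec2_eq)
    then show ?thesis using conn_lines[of "{-1..1}" "{0..<1}"] by (auto simp: is_interval_1)
  qed
qed


lemma std_path:
  assumes g: "path \<gamma>" "path_image \<gamma> \<subseteq> standard_triod" "\<gamma> 0 = e i" "\<gamma> 1 = e j"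
    and ij: "i < 3" "j < 3" "i \<noteq> j" and s: "0 < s" "s \<le> 1"
  shows "\<exists>t1 t0 t2. 0 \<le> t1 \<and> t1 \<le> t0 \<and> t0 \<le> t2 \<and> t2 \<le> 1 \<and> \<gamma> t1 = q i s \<and> \<gamma> t0 = 0 \<and> \<gamma> t2 = q j s"
proof -
  have gS: "\<gamma> t \<in> standard_triod" if "0 \<le> t" "t \<le> 1" for t
    using g(2) that unfolding path_image_def by auto
  have cg: "continuous_on {0..1} \<gamma>" using g(1) unfolding path_def .
  have cpos: "continuous_on {a..b} (\<lambda>t. pos k (\<gamma> t))" if "k < 3" "0 \<le> a" "b \<le> 1" for k a b
  proof -
    have "continuous_on {a..b} \<gamma>" by (rule continuous_on_subset[OF cg]) (use that in auto)
    then show ?thesis using continuous_on_compose[of "{a..b}" \<gamma> "pos k"] pos_cont[OF that(1)] by (simp add: o_def)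
  qed
  have "\<exists>t0. 0 \<le> t0 \<and> t0 \<le> 1 \<and> pos j (\<gamma> t0) = 0"
    using IVT'[of "\<lambda>t. pos j (\<gamma> t)" 0 0 1] cpos[OF ij(2), of 0 1] g(3,4) pos_e ij by auto
  then obtain t0 where t0: "0 \<le> t0" "t0 \<le> 1" "pos j (\<gamma> t0) = 0" by blast
  have g0: "\<gamma> t0 = 0" using pos_zero[OF ij(2) gS[OF t0(1,2)] t0(3)] .
  have "\<exists>t1. 0 \<le> t1 \<and> t1 \<le> t0 \<and> pos i (\<gamma> t1) = s"
    using IVT2'[of "\<lambda>t. pos i (\<gamma> t)" t0 "s" 0] cpos[OF ij(1), of 0 t0] g(3) pos_e ij t0 g0 s
    by (auto simp: pos_def)
  then obtain t1 where t1: "0 \<le> t1" "t1 \<le> t0" "pos i (\<gamma> t1) = s" by blast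
  have "\<exists>t2. t0 \<le> t2 \<and> t2 \<le> 1 \<and> pos j (\<gamma> t2) = s"
    using IVT'[of "\<lambda>t. pos j (\<gamma> t)" t0 "s" 1] cpos[OF ij(2), of t0 1] g(4) pos_e ij t0 g0 s
    by (auto simp: pos_def)
  then obtain t2 where t2: "t0 \<le> t2" "t2 \<le> 1" "pos j (\<gamma> t2) = s" by blast
  have "\<gamma> t1 \<in> standard_triod" "\<gamma> t2 \<in> standard_triod" using gS t0 t1 t2 by auto
  then have "\<gamma> t1 = q i s" "\<gamma> t2 = q j s" using pos_s[OF ij(1) _ s(1) t1(3)] pos_s[OF ij(2) _ s(1) t2(3)] by auto
  then show ?thesis using t0 t1 t2 g0 by blast
qed

theorem mainTheorem7:
  fixes P T :: "(real^2) set" and a b c x :: "real^2"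
    and g_ab g_bc g_ac :: "real \<Rightarrow> real^2"
  assumes "pl_disk P"
    and "T \<subseteq> P" and "triod T"
    and "triod_endpoints T = {a, b, c}"
    and "triod_vertex T x"
    and "arc g_ab" "path_image g_ab \<subseteq> T" "pathstart g_ab = a" "pathfinish g_ab = b"
    and "arc g_bc" "path_image g_bc \<subseteq> T" "pathstart g_bc = b" "pathfinish g_bc = c"
    and "arc g_ac" "path_image g_ac \<subseteq> T" "pathstart g_ac = a" "pathfinish g_ac = c"
  shows "\<not> geodesic_in P g_ab \<or> \<not> geodesic_in P g_bc \<or> \<not> geodesic_in P g_ac"
proof (rule ccontr)
  assume "\<not> ?thesis"
  then have G: "geodesic_in P g_ab" "geodesic_in P g_bc" "geodesic_in P g_ac" by auto
  note A = assms
  define S where "S = standard_triod"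
  have "S homeomorphic T" using A(3) unfolding triod_def S_def using homeomorphic_sym by blast
  then obtain h k where hk: "homeomorphism S T h k" unfolding homeomorphic_def by blast
  have hk1: "\<And>x. x \<in> S \<Longrightarrow> k (h x) = x" "h ` S = T" "continuous_on S h"
    "\<And>y. y \<in> T \<Longrightarrow> h (k y) = y" "k ` T = S" "continuous_on T k"
    using hk unfolding homeomorphism_def by auto
  have eS: "e i \<in> S" if "i < 3" for i using e_in[OF that] unfolding S_def .
  have endp: "h (e i) \<in> triod_endpoints T" if i: "i < 3" for i
  proof -
    have "T - {h (e i)} = h ` (S - {e i})"
    proof
      show "T - {h (e i)} \<subseteq> h ` (S - {e i})"
      proof
        fix y assume y: "y \<in> T - {h (e i)}"
        then have "k y \<in> S" "h (k y) = y" using hk1 by auto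
        moreover have "k y \<noteq> e i" using y \<open>h (k y) = y\<close> by auto
        ultimately show "y \<in> h ` (S - {e i})" by (metis DiffI image_eqI singletonD)
      qed
      show "h ` (S - {e i}) \<subseteq> T - {h (e i)}"
      proof
        fix y assume "y \<in> h ` (S - {e i})"
        then obtain z where z: "z \<in> S" "z \<noteq> e i" "y = h z" by blast
        have "h z \<noteq> h (e i)" using hk1(1)[OF z(1)] hk1(1)[OF eS[OF i]] z(2) by metis
        moreover have "h z \<in> T" using z(1) hk1(2) by blast
        ultimately show "y \<in> T - {h (e i)}" using z(3) by simp
      qed
    qed
    moreover have "connected (h ` (S - {e i}))"
      using connected_continuous_image[OF continuous_on_subset[OF hk1(3)] conn_minus_e[OF i, folded S_def]]
      by blast
    moreover have "h (e i) \<in> T" using hk1(2) eS[OF i] by blast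
    ultimately show ?thesis unfolding triod_endpoints_def by simp
  qed
  have hinj: "h (e i) = h (e j) \<Longrightarrow> i = j" if "i < 3" "j < 3" for i j
    using hk1(1)[OF eS[OF that(1)]] hk1(1)[OF eS[OF that(2)]] e_inj[OF that] by metis
  define E where "E = {h (e 0), h (e 1), h (e 2)}"
  have cE: "card E = 3" unfolding E_def using hinj[of 0 1] hinj[of 0 2] hinj[of 1 2] by (auto simp: card_insert_if)
  have Esub: "E \<subseteq> {a, b, c}" unfolding E_def using endp[of 0] endp[of 1] endp[of 2] A(4) by auto
  have cabc: "card {a, b, c} \<le> 3" by (rule card_insert_le_m1) (auto simp: card_insert_le_m1 intro: order_trans[OF card_insert_le_m1])
  have Eeq: "E = {a, b, c}" using card_seteq[OF _ Esub] cE cabc by simp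
  have dist3: "a \<noteq> b" "b \<noteq> c" "a \<noteq> c"
    using cE unfolding Eeq by (auto simp: card_insert_if split: if_splits)
  have "a \<in> E" "b \<in> E" "c \<in> E" unfolding Eeq by auto
  then obtain ia ib ic where idx: "ia < 3" "ib < 3" "ic < 3" "a = h (e ia)" "b = h (e ib)" "c = h (e ic)"
    unfolding E_def by (metis insertE empty_iff numeral_3_eq_3 less_Suc_eq zero_less_Suc One_nat_def numeral_2_eq_2 lessI)
  have ne: "ia \<noteq> ib" "ib \<noteq> ic" "ia \<noteq> ic" using dist3 idx by auto
  define x0 where "x0 = h 0"
  have x0T: "x0 \<in> T" using hk1(2) zero_in unfolding x0_def S_def by blast
  have x0P: "x0 \<in> P" using x0T A(2) by blast
  obtain r where r: "r > 0" and loc: "\<And>u v w. u \<in> P \<inter> ball x0 r - {x0} \<Longrightarrow> v \<in> P \<inter> ball x0 r - {x0} \<Longrightarrow>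
     w \<in> P \<inter> ball x0 r - {x0} \<Longrightarrow> good_pair P x0 u v \<or> good_pair P x0 v w \<or> good_pair P x0 u w"
    using local_lemma[OF A(1) x0P] by blast
  have "0 \<in> S" using zero_in unfolding S_def .
  then obtain \<delta> where d: "\<delta> > 0" "\<And>z. z \<in> S \<Longrightarrow> dist z 0 < \<delta> \<Longrightarrow> dist (h z) (h 0) < r"
    using hk1(3) r unfolding continuous_on_iff by metis
  define s where "s = min (1/2) (\<delta>/2)"
  have s: "0 < s" "s \<le> 1" "s < \<delta>" using d unfolding s_def by auto
  define U where "U = (\<lambda>i. h (q i s))"
  have U: "U i \<in> P \<inter> ball x0 r - {x0}" if i: "i < 3" for i
  proof -
    have qS: "q i s \<in> S" using q_in[OF i] s unfolding S_def by simp
    have "dist (q i s) 0 < \<delta>" using q_norm[OF i] s by simp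
    then have "dist (h (q i s)) x0 < r" using d(2)[OF qS] unfolding x0_def by simp
    moreover have "h (q i s) \<in> P" using qS hk1(2) A(2) by blast
    moreover have "h (q i s) \<noteq> x0"
    proof
      assume "h (q i s) = x0"
      then have "k (h (q i s)) = k (h 0)" unfolding x0_def by simp
      then have "q i s = 0" using hk1(1)[OF qS] hk1(1)[OF \<open>0 \<in> S\<close>] by simp
      then show False using q_ne0[OF i s(1)] by simp
    qed
    ultimately show ?thesis unfolding U_def by (simp add: dist_commute)
  qed
  have tp: "\<exists>t1 t0 t2. 0 \<le> t1 \<and> t1 \<le> t0 \<and> t0 \<le> t2 \<and> t2 \<le> 1 \<and> g t1 = U i \<and> g t0 = x0 \<and> g t2 = U j"
    if g: "path g" "path_image g \<subseteq> T" "g 0 = h (e i)" "g 1 = h (e j)" and ij: "i < 3" "j < 3" "i \<noteq> j" for g i j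
  proof -
    define \<gamma> where "\<gamma> = k \<circ> g"
    have "continuous_on {0..1} \<gamma>" unfolding \<gamma>_def
      using g(1,2) unfolding path_def path_image_def
      by (intro continuous_on_compose continuous_on_subset[OF hk1(6)]) auto
    then have pg: "path \<gamma>" unfolding path_def .
    have ig: "path_image \<gamma> \<subseteq> standard_triod"
      using g(2) hk1(5) unfolding \<gamma>_def path_image_def S_def by auto
    have g01: "\<gamma> 0 = e i" "\<gamma> 1 = e j" unfolding \<gamma>_def using g hk1(1) eS ij by auto
    obtain t1 t0 t2 where t: "0 \<le> t1" "t1 \<le> t0" "t0 \<le> t2" "t2 \<le> 1" "\<gamma> t1 = q i s" "\<gamma> t0 = 0" "\<gamma> t2 = q j s"
      using std_path[OF pg ig g01 ij s(1,2)] by blast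
    have bk: "g t = h (\<gamma> t)" if "0 \<le> t" "t \<le> 1" for t
    proof -
      have "g t \<in> T" using g(2) that unfolding path_image_def by auto
      then show ?thesis using hk1(4) unfolding \<gamma>_def by simp
    qed
    show ?thesis using t bk[of t1] bk[of t0] bk[of t2] unfolding U_def x0_def
      by (intro exI[of _ t1] exI[of _ t0] exI[of _ t2]) auto
  qed
  have arcs: "path g_ab" "path g_bc" "path g_ac" using A arc_imp_path by auto
  obtain a1 a0 a2 where ta: "0 \<le> a1" "a1 \<le> a0" "a0 \<le> a2" "a2 \<le> 1" "g_ab a1 = U ia" "g_ab a0 = x0" "g_ab a2 = U ib"
    using tp[OF arcs(1) A(7) _ _ idx(1,2) ne(1)] A(8,9) idx unfolding pathstart_def pathfinish_def by blast
  obtain b1 b0 b2 where tb: "0 \<le> b1" "b1 \<le> b0" "b0 \<le> b2" "b2 \<le> 1" "g_bc b1 = U ib" "g_bc b0 = x0" "g_bc b2 = U ic"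
    using tp[OF arcs(2) A(11) _ _ idx(2,3) ne(2)] A(12,13) idx unfolding pathstart_def pathfinish_def by blast
  obtain c1 c0 c2 where tc: "0 \<le> c1" "c1 \<le> c0" "c0 \<le> c2" "c2 \<le> 1" "g_ac c1 = U ia" "g_ac c0 = x0" "g_ac c2 = U ic"
    using tp[OF arcs(3) A(15) _ _ idx(1,3) ne(3)] A(16,17) idx unfolding pathstart_def pathfinish_def by blast
  have "good_pair P x0 (U ia) (U ib) \<or> good_pair P x0 (U ib) (U ic) \<or> good_pair P x0 (U ia) (U ic)"
    using loc[OF U[OF idx(1)] U[OF idx(2)] U[OF idx(3)]] .
  then show False
  proof (elim disjE)
    assume "good_pair P x0 (U ia) (U ib)"
    then show False using geo_contra[OF A(1) G(1) ta] unfolding good_pair_def by blast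
  next
    assume "good_pair P x0 (U ib) (U ic)"
    then show False using geo_contra[OF A(1) G(2) tb] unfolding good_pair_def by blast
  next
    assume "good_pair P x0 (U ia) (U ic)"
    then show False using geo_contra[OF A(1) G(3) tc] unfolding good_pair_def by blast
  qed
qed

end
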